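(* Let $X$ be a topological space and $(Y,d)$ a metric space. For $f\in C(X,Y)$ and $\epsilon\in LSC(X,(0,1))$ put $B(f,\epsilon)=\{g\in C(X,Y): d(f(x),g(x))<\epsilon(x)\text{ for all }x\in X\}$. Then the family of all sets $B(f,\epsilon)$ with $f\in C(X,Y)$ and $\epsilon\in LSC(X,(0,1))$ is a base for the graph topology $\tau_\Gamma$ on $C(X,Y)$.
   Context: For topological spaces $X,Y$, $C(X,Y)$ denotes the set of continuous maps $X\to Y$; each $f\in C(X,Y)$ is identified with its graph $\{(x,f(x)):x\in X\}\subset X\times Y$. For $G$ open in $X\times Y$ let $F_G=\{f\in C(X,Y): f\subset G\}$. The graph topology $\tau_\Gamma$ on $C(X,Y)$ is the topology having the sets $F_G$ ($G$ open in $X\times Y$) as a base. $LSC(X,(0,1))$ denotes the set of all lower semicontinuous functions $X\to(0,1)$. *)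

theory Defs
  imports "HOL-Analysis.Analysis"
begin

text \<open>C(X,Y): continuous maps X to Y (X, Y given by their type topologies).\<close>
definition Cmaps :: "('a::topological_space \<Rightarrow> 'b::topological_space) set" where
  "Cmaps = {f. continuous_on UNIV f}"

definition FG :: "('a::topological_space \<times> 'b::topological_space) set \<Rightarrow> ('a \<Rightarrow> 'b) set" where
  "FG G = {f \<in> Cmaps. \<forall>x. (x, f x) \<in> G}"

definition graph_topology :: "('a::topological_space \<Rightarrow> 'b::topological_space) topology" where
  "graph_topology = topology (arbitrary union_of (\<lambda>U. \<exists>G. open G \<and> U = FG G))"

definition lsc :: "('a::topological_space \<Rightarrow> real) \<Rightarrow> bool" where
  "lsc e \<longleftrightarrow> (\<forall>t. open {x. t < e x})"

definition LSC01 :: "('a::topological_space \<Rightarrow> real) set" where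
  "LSC01 = {e. lsc e \<and> (\<forall>x. 0 < e x \<and> e x < 1)}"

definition Bfe :: "('a::topological_space \<Rightarrow> 'b::metric_space) \<Rightarrow> ('a \<Rightarrow> real) \<Rightarrow> ('a \<Rightarrow> 'b) set" where
  "Bfe f e = {g \<in> Cmaps. \<forall>x. dist (f x) (g x) < e x}"

end

theory Submission
  imports Defs
begin

lemma Bfe_open:
  fixes f :: "'a::topological_space \<Rightarrow> 'b::metric_space"
  assumes f: "f \<in> Cmaps" and e: "e \<in> LSC01"
  shows "open {p. dist (f (fst p)) (snd p) < e (fst p)}" (is "open ?G")
proof (rule open_prod_intro)
  fix p assume "p \<in> ?G"
  then obtain x0 y0 where p: "p = (x0, y0)" and d: "dist (f x0) y0 < e x0"
    by (cases p) auto
  define r where "r = e x0 - dist (f x0) y0"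
  have r: "r > 0" using d r_def by simp
  define U where "U = {x. e x0 - r/3 < e x} \<inter> f -` ball (f x0) (r/3)"
  have "open {x. e x0 - r/3 < e x}" using e by (simp add: LSC01_def lsc_def)
  moreover have "open (f -` ball (f x0) (r/3))"
    using f by (simp add: Cmaps_def continuous_on_open_vimage)
  ultimately have oU: "open U" unfolding U_def by auto
  have xU: "x0 \<in> U" using r by (simp add: U_def)
  have sub: "U \<times> ball y0 (r/3) \<subseteq> ?G"
  proof clarify
    fix x y assume "x \<in> U" "y \<in> ball y0 (r/3)"
    hence h1: "e x0 - r/3 < e x" "dist (f x0) (f x) < r/3" "dist y0 y < r/3"
      by (auto simp: U_def)
    have "dist (f x) y \<le> dist (f x) (f x0) + dist (f x0) y0 + dist y0 y"
      by (metis dist_triangle add.commute add_le_cancel_left order_trans dist_triangle2)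
    moreover have "dist (f x) (f x0) = dist (f x0) (f x)" by (rule dist_commute)
    ultimately have "dist (f x) y < e x" using h1 r_def by linarith
    thus "dist (f (fst (x, y))) (snd (x, y)) < e (fst (x, y))" by simp
  qed
  show "\<exists>A B. open A \<and> open B \<and> p \<in> A \<times> B \<and> A \<times> B \<subseteq> ?G"
    using oU xU sub r p by (intro exI[of _ U] exI[of _ "ball y0 (r/3)"]) auto
qed

lemma Bfe_eq:
  "Bfe f e = FG {p. dist (f (fst p)) (snd p) < e (fst p)}"
  by (auto simp: Bfe_def FG_def)

lemma FG_cover:
  fixes f :: "'a::topological_space \<Rightarrow> 'b::metric_space"
  assumes G: "open G" and f: "f \<in> FG G"
  shows "\<exists>e \<in> LSC01. f \<in> Bfe f e \<and> Bfe f e \<subseteq> FG G"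
proof -
  define S where "S x = {r::real. 0 < r \<and> r \<le> 1/2 \<and> (\<exists>U. open U \<and> x \<in> U \<and>
      (\<forall>z\<in>U. \<forall>y. dist (f z) y < r \<longrightarrow> (z, y) \<in> G))}" for x
  define e where "e x = Sup (S x)" for x
  have fc: "continuous_on UNIV f" using f by (simp add: FG_def Cmaps_def)
  have bdd: "bdd_above (S x)" for x unfolding S_def by (rule bdd_aboveI[of _ "1/2"]) auto
  have ne: "\<exists>r. r \<in> S x" for x
  proof -
    have "(x, f x) \<in> G" using f by (simp add: FG_def)
    then obtain A B where AB: "open A" "open B" "(x, f x) \<in> A \<times> B" "A \<times> B \<subseteq> G"
      using open_prod_elim[OF G] by metis
    then obtain s where s: "s > 0" "ball (f x) s \<subseteq> B"
      using open_contains_ball by (metis SigmaD2)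
    define r where "r = min (s/2) (1/2)"
    define U where "U = A \<inter> f -` ball (f x) r"
    have "open U" unfolding U_def using AB fc
      by (simp add: continuous_on_open_vimage open_Int)
    moreover have "x \<in> U" using AB s by (simp add: U_def r_def)
    moreover have "\<forall>z\<in>U. \<forall>y. dist (f z) y < r \<longrightarrow> (z, y) \<in> G"
    proof (intro ballI allI impI)
      fix z y assume z: "z \<in> U" and d: "dist (f z) y < r"
      have "dist (f x) (f z) < r" using z by (simp add: U_def)
      hence "dist (f x) y < s" using d dist_triangle[of "f x" y "f z"] r_def by linarith
      hence "y \<in> B" using s by auto
      thus "(z, y) \<in> G" using z AB by (auto simp: U_def)
    qed
    ultimately have "r \<in> S x" using s by (auto simp: S_def r_def)
    thus ?thesis by blast
  qed
  have ne': "S x \<noteq> {}" for x using ne by blast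
  have lt: "t < e x \<longleftrightarrow> (\<exists>r\<in>S x. t < r)" for t x
    unfolding e_def by (rule less_cSup_iff[OF ne' bdd])
  have le: "e x \<le> 1/2" for x unfolding e_def
    by (rule cSup_least[OF ne']) (auto simp: S_def)
  have pos: "0 < e x" for x using ne[of x] lt[of 0 x] by (auto simp: S_def)
  have lsc: "lsc e" unfolding lsc_def
  proof
    fix t
    show "open {x. t < e x}"
    proof (subst open_subopen, intro ballI)
      fix x assume "x \<in> {x. t < e x}"
      then obtain r where r: "r \<in> S x" "t < r" using lt by blast
      then obtain U where U: "open U" "x \<in> U" "\<forall>z\<in>U. \<forall>y. dist (f z) y < r \<longrightarrow> (z, y) \<in> G"
        and r0: "0 < r" "r \<le> 1/2" by (auto simp: S_def)
      have "U \<subseteq> {x. t < e x}"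
      proof
        fix z assume "z \<in> U"
        hence "r \<in> S z" using U r0 by (auto simp: S_def)
        thus "z \<in> {x. t < e x}" using lt r by blast
      qed
      thus "\<exists>T. open T \<and> x \<in> T \<and> T \<subseteq> {x. t < e x}" using U by blast
    qed
  qed
  have eL: "e \<in> LSC01" using lsc pos le proof -
    have "e x < 1" for x using le[of x] by linarith
    thus ?thesis using lsc pos by (auto simp: LSC01_def)
  qed
  have "f \<in> Bfe f e" using f pos by (simp add: Bfe_def FG_def)
  moreover have "Bfe f e \<subseteq> FG G"
  proof
    fix g assume g: "g \<in> Bfe f e"
    have "(z, g z) \<in> G" for z
    proof -
      have "dist (f z) (g z) < e z" using g by (simp add: Bfe_def)
      then obtain r where r: "r \<in> S z" "dist (f z) (g z) < r" using lt by blast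
      then show ?thesis by (auto simp: S_def)
    qed
    thus "g \<in> FG G" using g by (simp add: Bfe_def FG_def)
  qed
  ultimately show ?thesis using eL by blast
qed

lemma FG_Int: "FG G \<inter> FG H = FG (G \<inter> H)"
  by (auto simp: FG_def)

theorem lemma1p1:
  shows "openin (graph_topology :: ('a::topological_space \<Rightarrow> 'b::metric_space) topology)
           = arbitrary union_of (\<lambda>U. \<exists>f e. f \<in> Cmaps \<and> e \<in> LSC01 \<and> U = Bfe f e)"
proof -
  let ?P = "\<lambda>U::('a \<Rightarrow> 'b) set. \<exists>G. open G \<and> U = FG G"
  have "istopology (arbitrary union_of ?P)"
    by (rule istopology_base) (metis FG_Int open_Int)
  hence o: "openin (graph_topology :: ('a \<Rightarrow> 'b) topology) = arbitrary union_of ?P"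
    unfolding graph_topology_def by (simp add: topology_inverse')
  show ?thesis unfolding o
  proof (intro ext iffI)
    fix S :: "('a \<Rightarrow> 'b) set" assume "(arbitrary union_of ?P) S"
    then show "(arbitrary union_of (\<lambda>U. \<exists>f e. f \<in> Cmaps \<and> e \<in> LSC01 \<and> U = Bfe f e)) S"
      unfolding arbitrary_union_of_alt
    proof (intro ballI)
      fix x assume H: "\<forall>x\<in>S. \<exists>U. ?P U \<and> x \<in> U \<and> U \<subseteq> S" and x: "x \<in> S"
      then obtain G where G: "open G" "x \<in> FG G" "FG G \<subseteq> S" by blast
      then obtain e where "e \<in> LSC01" "x \<in> Bfe x e" "Bfe x e \<subseteq> FG G"
        using FG_cover by blast
      moreover have "x \<in> Cmaps" using G by (simp add: FG_def)
      ultimately show "\<exists>U. (\<exists>f e. f \<in> Cmaps \<and> e \<in> LSC01 \<and> U = Bfe f e) \<and> x \<in> U \<and> U \<subseteq> S"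
        using G by blast
    qed
  next
    fix S :: "('a \<Rightarrow> 'b) set" assume "(arbitrary union_of (\<lambda>U. \<exists>f e. f \<in> Cmaps \<and> e \<in> LSC01 \<and> U = Bfe f e)) S"
    then show "(arbitrary union_of ?P) S"
    proof (rule union_of_mono)
      fix U :: "('a \<Rightarrow> 'b) set" assume "\<exists>f e. f \<in> Cmaps \<and> e \<in> LSC01 \<and> U = Bfe f e"
      then obtain f e where "f \<in> Cmaps" "e \<in> LSC01" "U = Bfe f e" by blast
      then show "?P U" using Bfe_open Bfe_eq by blast
    qed
  qed
qed

end
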